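(* Let $H$ be a binary Hamming code of length $n=2^k-1$ and let $\lambda:H\to\{0,1\}$ be a Boolean function with $\lambda(0^n)=0$ that is not linear. Let $V_H^\lambda=\{(x+y,\ |x|+\lambda(y),\ x)\mid x\in F^n,\ y\in H\}$. For $y'\in H$, the codeword $z=(y',\lambda(y'),0^n)$ belongs to $\mathrm{Tr}(V_H^\lambda)$ if and only if there exist $\pi\in \mathrm{Sym}(H)$ and $u\in F^n$ such that for all $y\in H$ $$\lambda(y')+\lambda(y)+\lambda(y'+\pi(y))=u\cdot y .$$
   Context: $F^n$ is the space of binary vectors of length $n$; $|x|=x_1+\dots+x_n\pmod 2$; $u\cdot y$ is the scalar product over $\mathbb{F}_2$. Permutations act on vectors by permuting coordinates. For a code $D\subseteq F^m$, $\mathrm{Sym}(D)=\{\pi\in S_m\mid \pi(D)=D\}$ and the translator is $\mathrm{Tr}(D)=\{z\in D\mid \exists \pi\in S_m:\ z+\pi(D)=D\}$. *)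

theory Defs
  imports "HOL-Combinatorics.Permutations"
begin

text \<open>Binary vectors of length n: functions nat => bool vanishing outside {..<n}.\<close>
type_synonym bvec = "nat \<Rightarrow> bool"

definition bxor :: "bool \<Rightarrow> bool \<Rightarrow> bool" where
  "bxor a b = (a \<noteq> b)"

definition Fn :: "nat \<Rightarrow> bvec set" where
  "Fn n = {x. \<forall>i. n \<le> i \<longrightarrow> \<not> x i}"

definition zerov :: bvec where
  "zerov = (\<lambda>_. False)"

definition vadd :: "bvec \<Rightarrow> bvec \<Rightarrow> bvec" where
  "vadd x y = (\<lambda>i. bxor (x i) (y i))"

text \<open>Weight parity |x| (as a bit) and scalar product over F_2.\<close>
definition wpar :: "nat \<Rightarrow> bvec \<Rightarrow> bool" where
  "wpar n x = odd (card {i. i < n \<and> x i})"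

definition sprod :: "nat \<Rightarrow> bvec \<Rightarrow> bvec \<Rightarrow> bool" where
  "sprod n u y = odd (card {i. i < n \<and> u i \<and> y i})"

definition pact :: "(nat \<Rightarrow> nat) \<Rightarrow> bvec \<Rightarrow> bvec" where
  "pact \<pi> x = (\<lambda>i. x (inv \<pi> i))"

definition Sym :: "nat \<Rightarrow> bvec set \<Rightarrow> (nat \<Rightarrow> nat) set" where
  "Sym m D = {\<pi>. \<pi> permutes {..<m} \<and> pact \<pi> ` D = D}"

definition Tr :: "nat \<Rightarrow> bvec set \<Rightarrow> bvec set" where
  "Tr m D = {z \<in> D. \<exists>\<pi>. \<pi> permutes {..<m} \<and> vadd z ` (pact \<pi> ` D) = D}"

text \<open>Binary Hamming code of length n = 2^k - 1: the kernel of a parity check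
  matrix whose columns c 0, ..., c (n-1) are exactly the nonzero vectors of F^k.\<close>
definition hamming_code :: "nat \<Rightarrow> bvec set \<Rightarrow> bool" where
  "hamming_code k H \<longleftrightarrow> (\<exists>c :: nat \<Rightarrow> bvec.
      bij_betw c {..<2^k - 1} (Fn k - {zerov}) \<and>
      H = {x \<in> Fn (2^k - 1). \<forall>j<k. even (card {i. i < 2^k - 1 \<and> x i \<and> c i j})})"

definition linear_on :: "bvec set \<Rightarrow> (bvec \<Rightarrow> bool) \<Rightarrow> bool" where
  "linear_on H f \<longleftrightarrow> (\<forall>y\<in>H. \<forall>y'\<in>H. f (vadd y y') = bxor (f y) (f y'))"

text \<open>Concatenation (a, b, c) with a, c of length n and b a single bit:
  coordinates 0..n-1, n, n+1..2n.\<close>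
definition cat3 :: "nat \<Rightarrow> bvec \<Rightarrow> bool \<Rightarrow> bvec \<Rightarrow> bvec" where
  "cat3 n a b c = (\<lambda>i. if i < n then a i else if i = n then b
                       else if i \<le> 2*n then c (i - n - 1) else False)"

definition VHl :: "nat \<Rightarrow> bvec set \<Rightarrow> (bvec \<Rightarrow> bool) \<Rightarrow> bvec set" where
  "VHl n H lam = {cat3 n (vadd x y) (bxor (wpar n x) (lam y)) x | x y. x \<in> Fn n \<and> y \<in> H}"

end

theory Submission
  imports Defs
begin


definition pc :: "nat \<Rightarrow> (nat \<Rightarrow> bool) \<Rightarrow> bool" where
  "pc n P = odd (card {i. i < n \<and> P i})"

lemma pc_0[simp]: "pc 0 P = False"
  by (simp add: pc_def)

lemma pc_Suc[simp]: "pc (Suc n) P = (pc n P \<noteq> P n)"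
proof -
  have fin: "finite {i. i < n \<and> P i}" by simp
  have "{i. i < Suc n \<and> P i} = (if P n then insert n {i. i < n \<and> P i} else {i. i < n \<and> P i})"
    by (auto simp: less_Suc_eq)
  then show ?thesis using fin by (simp add: pc_def)
qed

lemma pc_cong: "(\<And>i. i < n \<Longrightarrow> P i = Q i) \<Longrightarrow> pc n P = pc n Q"
  unfolding pc_def by (rule arg_cong[where f="\<lambda>S. odd (card S)"]) auto

lemma pc_xor: "pc n (\<lambda>i. P i \<noteq> Q i) = (pc n P \<noteq> pc n Q)"
  by (induction n) auto

lemma pc_add: "pc (a+b) P = (pc a P \<noteq> pc b (\<lambda>m. P (a+m)))"
  by (induction b) auto

lemma pc_False[simp]: "pc n (\<lambda>_. False) = False"
  by (induction n) auto

lemma pc_single: "i < n \<Longrightarrow> pc n (\<lambda>m. P m \<and> m = i) = P i"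
proof (induction n)
  case 0 then show ?case by simp
next
  case (Suc n)
  show ?case
  proof (cases "i < n")
    case True with Suc show ?thesis by auto
  next
    case False
    then have "i = n" using Suc by auto
    moreover have "pc n (\<lambda>m. P m \<and> m = n) = False"
      by (subst pc_cong[where Q="\<lambda>_. False"]) auto
    ultimately show ?thesis by simp
  qed
qed

lemma pc_perm:
  assumes f: "f permutes {..<n}"
  shows "pc n (\<lambda>i. P (f i)) = pc n P"
proof -
  have "f ` {i. i < n \<and> P (f i)} = {j. j < n \<and> P j}"
  proof
    show "f ` {i. i < n \<and> P (f i)} \<subseteq> {j. j < n \<and> P j}"
      using permutes_in_image[OF f] by auto
  next
    show "{j. j < n \<and> P j} \<subseteq> f ` {i. i < n \<and> P (f i)}"
    proof
      fix j assume j: "j \<in> {j. j < n \<and> P j}"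
      have "inv f j < n" using j permutes_in_image[OF permutes_inv[OF f]] by auto
      moreover have "f (inv f j) = j" using permutes_inverses[OF f] by simp
      ultimately show "j \<in> f ` {i. i < n \<and> P (f i)}" using j
        by (metis (mono_tags, lifting) image_eqI mem_Collect_eq)
    qed
  qed
  moreover have "inj_on f {i. i < n \<and> P (f i)}"
    using permutes_inj[OF f] by (simp add: inj_on_def inj_def)
  ultimately have "card {i. i < n \<and> P (f i)} = card {j. j < n \<and> P j}"
    by (metis card_image)
  then show ?thesis by (simp add: pc_def)
qed

lemma wpar_pc: "wpar n x = pc n x"
  by (simp add: wpar_def pc_def)

lemma sprod_pc: "sprod n u y = pc n (\<lambda>i. u i \<and> y i)"
  by (simp add: sprod_def pc_def)

lemma vadd_apply[simp]: "vadd x y i = (x i \<noteq> y i)"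
  by (simp add: vadd_def bxor_def)

lemma Fn_iff: "x \<in> Fn n \<longleftrightarrow> (\<forall>i. n \<le> i \<longrightarrow> \<not> x i)"
  by (simp add: Fn_def)

lemma finite_Fn: "finite (Fn n)"
proof -
  have "Fn n \<subseteq> (\<lambda>S i. i \<in> S) ` Pow {..<n}"
  proof
    fix x assume x: "x \<in> Fn n"
    have "x = (\<lambda>i. i \<in> {i. x i})" by simp
    moreover have "{i. x i} \<subseteq> {..<n}" using x by (auto simp: Fn_def not_le[symmetric])
    ultimately show "x \<in> (\<lambda>S i. i \<in> S) ` Pow {..<n}" by blast
  qed
  then show ?thesis by (rule finite_subset) simp
qed

lemma cat3_inj:
  assumes "a \<in> Fn n" "c \<in> Fn n" "a' \<in> Fn n" "c' \<in> Fn n"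
    and e: "cat3 n a b c = cat3 n a' b' c'"
  shows "a = a' \<and> b = b' \<and> c = c'"
proof (intro conjI)
  show "a = a'"
  proof
    fix i show "a i = a' i"
    proof (cases "i < n")
      case True then show ?thesis using fun_cong[OF e, of i] by (simp add: cat3_def)
    next
      case False then show ?thesis using assms by (simp add: Fn_def)
    qed
  qed
  show "b = b'" using fun_cong[OF e, of n] by (simp add: cat3_def)
  show "c = c'"
  proof
    fix i show "c i = c' i"
    proof (cases "i < n")
      case True then show ?thesis using fun_cong[OF e, of "n+1+i"] by (simp add: cat3_def)
    next
      case False then show ?thesis using assms by (simp add: Fn_def)
    qed
  qed
qed

lemma vadd_cat3: "vadd (cat3 n a b c) (cat3 n a' b' c') = cat3 n (vadd a a') (bxor b b') (vadd c c')"
  by (auto simp: cat3_def bxor_def fun_eq_iff)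

lemma vadd_Fn: "x \<in> Fn n \<Longrightarrow> y \<in> Fn n \<Longrightarrow> vadd x y \<in> Fn n"
  by (simp add: Fn_def)

lemma cat3_Fn: "a \<in> Fn n \<Longrightarrow> c \<in> Fn n \<Longrightarrow> cat3 n a b c \<in> Fn (2*n+1)"
  by (auto simp: Fn_def cat3_def)

lemma pc_cat3:
  "pc (2*n+1) (\<lambda>i. T i \<and> cat3 n a b c i) =
     ((pc n (\<lambda>i. T i \<and> a i) \<noteq> (T n \<and> b)) \<noteq> pc n (\<lambda>m. T (n+1+m) \<and> c m))"
proof -
  have e: "2*n+1 = n + (1 + n)" by simp
  have "pc (2*n+1) (\<lambda>i. T i \<and> cat3 n a b c i) =
     (pc n (\<lambda>i. T i \<and> cat3 n a b c i) \<noteq> (pc 1 (\<lambda>m. T (n+m) \<and> cat3 n a b c (n+m))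
       \<noteq> pc n (\<lambda>m. T (n+(1+m)) \<and> cat3 n a b c (n+(1+m)))))"
    unfolding e pc_add by simp
  also have "pc n (\<lambda>i. T i \<and> cat3 n a b c i) = pc n (\<lambda>i. T i \<and> a i)"
    by (rule pc_cong) (simp add: cat3_def)
  also have "pc n (\<lambda>m. T (n+(1+m)) \<and> cat3 n a b c (n+(1+m))) = pc n (\<lambda>m. T (n+1+m) \<and> c m)"
    by (rule pc_cong) (simp add: cat3_def)
  also have "pc 1 (\<lambda>m. T (n+m) \<and> cat3 n a b c (n+m)) = (T n \<and> b)"
    by (simp add: cat3_def)
  finally show ?thesis by argo
qed


definition orthH :: "nat \<Rightarrow> bvec set \<Rightarrow> bvec \<Rightarrow> bool" where
  "orthH n H A \<longleftrightarrow> A \<in> Fn n \<and> (\<forall>y\<in>H. \<not> sprod n A y)"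

lemma ham_col:
  assumes "hamming_code k H" "n = 2^k - (1::nat)"
  obtains c where "bij_betw c {..<n} (Fn k - {zerov})"
    "H = {x \<in> Fn n. \<forall>j<k. even (card {i. i < n \<and> x i \<and> c i j})}"
  using assms by (auto simp: hamming_code_def)

lemma ham_Fn: "hamming_code k H \<Longrightarrow> n = 2^k - (1::nat) \<Longrightarrow> y \<in> H \<Longrightarrow> y \<in> Fn n"
  by (auto simp: hamming_code_def)

lemma ham_zero: "hamming_code k H \<Longrightarrow> n = 2^k - (1::nat) \<Longrightarrow> zerov \<in> H"
  by (auto simp: hamming_code_def zerov_def Fn_def)

lemma ham_add:
  assumes h: "hamming_code k H" "n = 2^k - (1::nat)" and y: "y1 \<in> H" "y2 \<in> H"
  shows "vadd y1 y2 \<in> H"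
proof -
  obtain c where c: "H = {x \<in> Fn n. \<forall>j<k. even (card {i. i < n \<and> x i \<and> c i j})}"
    by (rule ham_col[OF h])
  have e: "\<And>x j. even (card {i. i < n \<and> x i \<and> c i j}) = (\<not> pc n (\<lambda>i. x i \<and> c i j))"
    by (simp add: pc_def)
  have "pc n (\<lambda>i. vadd y1 y2 i \<and> c i j) = (pc n (\<lambda>i. y1 i \<and> c i j) \<noteq> pc n (\<lambda>i. y2 i \<and> c i j))" for j
    by (subst pc_xor[symmetric], rule pc_cong) auto
  then show ?thesis using y unfolding c e by (auto simp: Fn_def)
qed

lemma ham_col_orth:
  assumes h: "hamming_code k H" "n = 2^k - (1::nat)"
    and c: "H = {x \<in> Fn n. \<forall>j<k. even (card {i. i < n \<and> x i \<and> c i j})}" and j: "j < k"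
  shows "orthH n H (\<lambda>m. m < n \<and> c m j)"
proof -
  have "\<not> sprod n (\<lambda>m. m < n \<and> c m j) y" if "y \<in> H" for y
  proof -
    have "sprod n (\<lambda>m. m < n \<and> c m j) y = odd (card {i. i < n \<and> y i \<and> c i j})"
      unfolding sprod_def by (rule arg_cong[where f="\<lambda>S. odd (card S)"]) auto
    then show ?thesis using that j c by auto
  qed
  then show ?thesis by (auto simp: orthH_def Fn_def)
qed

lemma ham_sep1:
  assumes h: "hamming_code k H" "n = 2^k - (1::nat)" and i: "i < n"
  shows "\<exists>A. orthH n H A \<and> A i"
proof -
  obtain c where b: "bij_betw c {..<n} (Fn k - {zerov})"
    and c: "H = {x \<in> Fn n. \<forall>j<k. even (card {i. i < n \<and> x i \<and> c i j})}"
    by (rule ham_col[OF h])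
  have "c i \<in> Fn k - {zerov}" using b i by (auto simp: bij_betw_def)
  then have ci: "c i \<in> Fn k" "c i \<noteq> zerov" by auto
  then obtain j where j: "c i j" by (auto simp: zerov_def fun_eq_iff)
  then have "j < k" using ci(1) unfolding Fn_iff by (meson not_le)
  with j have "c i j" "j < k" by auto
  then show ?thesis using ham_col_orth[OF h c, of j] i by (intro exI[of _ "\<lambda>m. m < n \<and> c m j"]) simp
qed

lemma ham_sep2:
  assumes h: "hamming_code k H" "n = 2^k - (1::nat)" and i: "i < n" "i' < n" "i \<noteq> i'"
  shows "\<exists>A. orthH n H A \<and> A i \<noteq> A i'"
proof -
  obtain c where b: "bij_betw c {..<n} (Fn k - {zerov})"
    and c: "H = {x \<in> Fn n. \<forall>j<k. even (card {i. i < n \<and> x i \<and> c i j})}"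
    by (rule ham_col[OF h])
  have ci: "c i \<in> Fn k" "c i' \<in> Fn k" using b i by (auto simp: bij_betw_def)
  have "c i \<noteq> c i'" using b i by (auto simp: bij_betw_def inj_on_def)
  then obtain j where j: "c i j \<noteq> c i' j" by (auto simp: fun_eq_iff)
  then have "j < k" using ci unfolding Fn_iff by (meson not_le)
  then show ?thesis using ham_col_orth[OF h c, of j] i j by (intro exI[of _ "\<lambda>m. m < n \<and> c m j"]) simp
qed

lemma V_mem:
  assumes HF: "H \<subseteq> Fn n" and a: "a \<in> Fn n" and c: "c \<in> Fn n"
  shows "cat3 n a b c \<in> VHl n H lam \<longleftrightarrow> vadd a c \<in> H \<and> b = bxor (wpar n c) (lam (vadd a c))"
proof
  assume "cat3 n a b c \<in> VHl n H lam"
  then obtain x y where x: "x \<in> Fn n" "y \<in> H" and e: "cat3 n a b c = cat3 n (vadd x y) (bxor (wpar n x) (lam y)) x"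
    by (auto simp: VHl_def)
  have "vadd x y \<in> Fn n" using x HF vadd_Fn by blast
  from cat3_inj[OF a c this x(1) e] have "a = vadd x y" "b = bxor (wpar n x) (lam y)" "c = x" by auto
  moreover have "vadd (vadd x y) x = y" by (auto simp: fun_eq_iff)
  ultimately show "vadd a c \<in> H \<and> b = bxor (wpar n c) (lam (vadd a c))" using x by simp
next
  assume r: "vadd a c \<in> H \<and> b = bxor (wpar n c) (lam (vadd a c))"
  have "vadd c (vadd a c) = a" by (auto simp: fun_eq_iff)
  then have "cat3 n a b c = cat3 n (vadd c (vadd a c)) (bxor (wpar n c) (lam (vadd a c))) c" using r by simp
  then show "cat3 n a b c \<in> VHl n H lam" using r c unfolding VHl_def by blast
qed

lemma VHl_Fn: "H \<subseteq> Fn n \<Longrightarrow> VHl n H lam \<subseteq> Fn (2*n+1)"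
proof
  fix w assume HF: "H \<subseteq> Fn n" and "w \<in> VHl n H lam"
  then obtain x y where x: "x \<in> Fn n" "y \<in> H" and e: "w = cat3 n (vadd x y) (bxor (wpar n x) (lam y)) x"
    by (auto simp: VHl_def)
  have "vadd x y \<in> Fn n" using x HF vadd_Fn by blast
  then show "w \<in> Fn (2*n+1)" using cat3_Fn x e by blast
qed

lemma vadd_self[simp]: "vadd x x = zerov"
  by (simp add: fun_eq_iff zerov_def)

lemma orth_S:
  assumes HF: "H \<subseteq> Fn n" and A: "orthH n H A" and w: "w \<in> VHl n H lam"
  shows "\<not> pc (2*n+1) (\<lambda>i. cat3 n A False A i \<and> w i)"
proof -
  obtain x y where x: "x \<in> Fn n" "y \<in> H" and e: "w = cat3 n (vadd x y) (bxor (wpar n x) (lam y)) x"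
    using w by (auto simp: VHl_def)
  have "pc (2*n+1) (\<lambda>i. cat3 n A False A i \<and> w i) =
     ((pc n (\<lambda>i. cat3 n A False A i \<and> vadd x y i) \<noteq> False) \<noteq> pc n (\<lambda>m. cat3 n A False A (n+1+m) \<and> x m))"
    unfolding e pc_cat3 by (simp add: cat3_def)
  also have "pc n (\<lambda>i. cat3 n A False A i \<and> vadd x y i) = pc n (\<lambda>i. (A i \<and> x i) \<noteq> (A i \<and> y i))"
    by (rule pc_cong) (auto simp: cat3_def)
  also have "\<dots> = (pc n (\<lambda>i. A i \<and> x i) \<noteq> pc n (\<lambda>i. A i \<and> y i))"
    by (rule pc_xor)
  also have "pc n (\<lambda>m. cat3 n A False A (n+1+m) \<and> x m) = pc n (\<lambda>i. A i \<and> x i)"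
    by (rule pc_cong) (auto simp: cat3_def)
  finally have "pc (2*n+1) (\<lambda>i. cat3 n A False A i \<and> w i) = pc n (\<lambda>i. A i \<and> y i)" by argo
  then show ?thesis using A x by (simp add: orthH_def sprod_pc del: pc_Suc)
qed

lemma lemma_O:
  assumes h: "hamming_code k H" "n = 2^k - (1::nat)" and nl: "\<not> linear_on H lam" and l0: "lam zerov = False"
    and T: "\<forall>v\<in>VHl n H lam. \<not> pc (2*n+1) (\<lambda>i. T i \<and> v i)"
  shows "\<exists>A. orthH n H A \<and> (\<forall>i<2*n+1. T i = cat3 n A False A i)"
proof -
  have HF: "H \<subseteq> Fn n" using ham_Fn[OF h] by blast
  define A where "A = (\<lambda>i. i < n \<and> T i)"
  have z0: "zerov \<in> H" using ham_zero[OF h] .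
  have wz: "wpar n zerov = False" by (simp add: wpar_pc zerov_def)
  have pair: "T i = (T n \<noteq> T (n+1+i))" if i: "i < n" for i
  proof -
    define e where "e = (\<lambda>m::nat. m = i)"
    have eF: "e \<in> Fn n" using i by (auto simp: e_def Fn_def)
    have we: "wpar n e = True" using pc_single[OF i, of "\<lambda>_. True"] by (simp add: wpar_pc e_def)
    have "cat3 n e True e \<in> VHl n H lam"
      using V_mem[OF HF eF eF] z0 l0 we by (simp add: bxor_def)
    then have "\<not> pc (2*n+1) (\<lambda>j. T j \<and> cat3 n e True e j)" using T by blast
    then show ?thesis unfolding pc_cat3 e_def using pc_single[OF i, of T] pc_single[OF i, of "\<lambda>m. T (n+1+m)"]
      by simp argo
  qed
  have ylin: "pc n (\<lambda>i. A i \<and> y i) = (T n \<and> lam y)" if y: "y \<in> H" for y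
  proof -
    have yF: "y \<in> Fn n" using y HF by blast
    have zF: "zerov \<in> Fn n" by (simp add: Fn_def zerov_def)
    have "vadd y zerov = y" by (simp add: fun_eq_iff zerov_def)
    then have "cat3 n y (lam y) zerov \<in> VHl n H lam"
      using V_mem[OF HF yF zF] y wz by (simp add: bxor_def)
    then have "\<not> pc (2*n+1) (\<lambda>j. T j \<and> cat3 n y (lam y) zerov j)" using T by blast
    moreover have "pc n (\<lambda>i. A i \<and> y i) = pc n (\<lambda>i. T i \<and> y i)" by (rule pc_cong) (simp add: A_def)
    ultimately show ?thesis unfolding pc_cat3 by (simp add: zerov_def)
  qed
  have Tn: "\<not> T n"
  proof
    assume Tn: "T n"
    have "linear_on H lam"
      unfolding linear_on_def
    proof (intro ballI)
      fix y y' assume y: "y \<in> H" "y' \<in> H"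
      have "vadd y y' \<in> H" using ham_add[OF h y] .
      then have "lam (vadd y y') = pc n (\<lambda>i. A i \<and> vadd y y' i)" using ylin Tn by (simp del: vadd_apply)
      also have "\<dots> = pc n (\<lambda>i. (A i \<and> y i) \<noteq> (A i \<and> y' i))" by (rule pc_cong) auto
      also have "\<dots> = bxor (lam y) (lam y')" using ylin[OF y(1)] ylin[OF y(2)] Tn unfolding pc_xor by (simp add: bxor_def)
      finally show "lam (vadd y y') = bxor (lam y) (lam y')" .
    qed
    with nl show False by simp
  qed
  have "orthH n H A" using ylin Tn by (auto simp: orthH_def sprod_pc A_def Fn_def)
  moreover have "T i = cat3 n A False A i" if iN: "i < 2*n+1" for i
  proof -
    consider "i < n" | "i = n" | "n < i" "i \<le> 2*n" using iN by (cases "i < n"; cases "i = n") auto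
    then show ?thesis
    proof cases
      case 1 then show ?thesis by (simp add: cat3_def A_def)
    next
      case 2 then show ?thesis using Tn by (simp add: cat3_def)
    next
      case 3
      then have "i - n - 1 < n" "n + 1 + (i - n - 1) = i" by auto
      then show ?thesis using pair[of "i-n-1"] 3 Tn by (simp add: cat3_def A_def)
    qed
  qed
  ultimately show ?thesis by blast
qed




definition partner :: "nat \<Rightarrow> nat \<Rightarrow> nat" where
  "partner n a = (if a < n then n+1+a else a - n - 1)"

definition idx :: "nat \<Rightarrow> nat \<Rightarrow> nat" where
  "idx n a = (if a < n then a else a - n - 1)"

definition goodp :: "nat \<Rightarrow> (nat \<Rightarrow> nat) \<Rightarrow> bool" where
  "goodp n f \<longleftrightarrow> f permutes {..<2*n+1} \<and> f n = n \<and> (\<forall>i<n. f (n+1+i) = partner n (f i))"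

lemma goodp_inv:
  assumes g: "goodp n f" shows "goodp n (inv f)"
proof -
  have f: "f permutes {..<2*n+1}" and fn: "f n = n" and fp: "\<And>i. i<n \<Longrightarrow> f (n+1+i) = partner n (f i)"
    using g by (auto simp: goodp_def)
  have fi: "inv f permutes {..<2*n+1}" using permutes_inv[OF f] .
  have ifn: "inv f n = n" using fn permutes_inverses(2)[OF f, of n] by simp
  have "inv f (n+1+i) = partner n (inv f i)" if i: "i < n" for i
  proof -
    define a where "a = inv f i"
    have fa: "f a = i" using permutes_inverses(1)[OF f] a_def by simp
    have aN: "a < 2*n+1" using permutes_in_image[OF fi, of i] i a_def by simp
    have an: "a \<noteq> n" using fa fn i by auto
    show ?thesis
    proof (cases "a < n")
      case True
      then have "f (n+1+a) = n+1+i" using fp[OF True] fa by (simp add: partner_def i)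
      then have "inv f (n+1+i) = n+1+a" using permutes_inverses(2)[OF f, of "n+1+a"] by simp
      then show ?thesis using True by (simp add: partner_def a_def[symmetric])
    next
      case False
      define m where "m = a - n - 1"
      have m: "m < n" "a = n+1+m" using False an aN m_def by auto
      have "i = partner n (f m)" using fp[OF m(1)] fa m(2) by simp
      have "f m \<noteq> n" using fn m(1) permutes_inj[OF f] by (metis inj_eq less_irrefl)
      then have "f m = n+1+i"
        using \<open>i = partner n (f m)\<close> permutes_in_image[OF f, of m] m(1) i by (auto simp: partner_def split: if_splits)
      then have "inv f (n+1+i) = m" using permutes_inverses(2)[OF f, of m] by simp
      then show ?thesis using False m by (simp add: partner_def a_def[symmetric])
    qed
  qed
  then show ?thesis using fi ifn by (simp add: goodp_def)
qed

lemma tau_cat3: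
  assumes t: "\<tau> permutes {..<2*n+1}" and p: "p permutes {..<n}" and tn: "\<tau> n = n"
    and t1: "\<And>j. j<n \<Longrightarrow> \<tau> j = (if s j then n+1+p j else p j)"
    and t2: "\<And>j. j<n \<Longrightarrow> \<tau> (n+1+j) = (if s j then p j else n+1+p j)"
    and a: "a \<in> Fn n" and c: "c \<in> Fn n"
  shows "(\<lambda>i. cat3 n a b c (\<tau> i)) = cat3 n (\<lambda>j. j<n \<and> (if s j then c (p j) else a (p j))) b
                                     (\<lambda>m. m<n \<and> (if s m then a (p m) else c (p m)))"
proof
  fix i
  have pl: "\<And>j. j < n \<Longrightarrow> p j < n" using permutes_in_image[OF p] by simp
  consider "i < n" | "i = n" | "n < i" "i \<le> 2*n" | "2*n < i" by linarith
  then show "cat3 n a b c (\<tau> i) = cat3 n (\<lambda>j. j<n \<and> (if s j then c (p j) else a (p j))) b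
                                     (\<lambda>m. m<n \<and> (if s m then a (p m) else c (p m))) i"
  proof cases
    case 1 then show ?thesis using t1[OF 1] pl[OF 1] by (simp add: cat3_def)
  next
    case 2 then show ?thesis using tn by (simp add: cat3_def)
  next
    case 3
    define m where "m = i - n - 1"
    have m: "m < n" "i = n+1+m" using 3 m_def by auto
    show ?thesis using t2[OF m(1)] pl[OF m(1)] m by (simp add: cat3_def)
  next
    case 4
    then have "\<tau> i = i" using permutes_not_in[OF t] by simp
    then show ?thesis using 4 by (simp add: cat3_def)
  qed
qed

lemma sprod_perm:
  assumes p: "p permutes {..<n}" and us: "\<And>j. j < n \<Longrightarrow> u (p j) = s j"
  shows "sprod n u y = pc n (\<lambda>j. s j \<and> y (p j))"
proof -
  have "sprod n u y = pc n (\<lambda>j. u (p j) \<and> y (p j))"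
    unfolding sprod_pc using pc_perm[OF p, of "\<lambda>i. u i \<and> y i"] by simp
  also have "\<dots> = pc n (\<lambda>j. s j \<and> y (p j))" by (rule pc_cong) (simp add: us)
  finally show ?thesis .
qed

lemma wpar_perm: "p permutes {..<n} \<Longrightarrow> pc n (\<lambda>j. x (p j)) = wpar n x"
  by (simp add: pc_perm wpar_pc)




lemma struct_ps:
  assumes g: "goodp n \<tau>"
  shows "\<exists>p s. p permutes {..<n} \<and> (\<forall>j. s j \<longrightarrow> j < n) \<and>
     (\<forall>j<n. \<tau> j = (if s j then n+1+p j else p j)) \<and>
     (\<forall>j<n. \<tau> (n+1+j) = (if s j then p j else n+1+p j))"
proof -
  have t: "\<tau> permutes {..<2*n+1}" and tn: "\<tau> n = n" and tp: "\<And>i. i<n \<Longrightarrow> \<tau> (n+1+i) = partner n (\<tau> i)"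
    using g by (auto simp: goodp_def)
  have tl: "\<tau> j < 2*n+1" if "j < 2*n+1" for j using permutes_in_image[OF t] that by simp
  have tne: "\<tau> j \<noteq> n" if "j \<noteq> n" for j using permutes_inj[OF t] tn that by (metis inj_eq)
  define p where "p = (\<lambda>j. if j < n then idx n (\<tau> j) else j)"
  define s where "s = (\<lambda>j. j < n \<and> n < \<tau> j)"
  have t1: "\<tau> j = (if s j then n+1+p j else p j)" if j: "j < n" for j
  proof -
    have "\<tau> j \<noteq> n" using tne j by simp
    then show ?thesis using j tl[of j] by (auto simp: s_def p_def idx_def)
  qed
  have t2: "\<tau> (n+1+j) = (if s j then p j else n+1+p j)" if j: "j < n" for j
  proof -
    have "\<tau> j \<noteq> n" using tne j by simp
    then show ?thesis using j tl[of j] tp[OF j] by (auto simp: s_def p_def idx_def partner_def)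
  qed
  have pl: "p j < n" if "j < n" for j
  proof -
    have "\<tau> j \<noteq> n" using tne that by simp
    then show ?thesis using that tl[of j] by (auto simp: p_def idx_def)
  qed
  have "inj_on p {..<n}"
  proof (rule inj_onI)
    fix j j' assume j: "j \<in> {..<n}" "j' \<in> {..<n}" and e: "p j = p j'"
    have jj: "j < n" "j' < n" using j by auto
    have inj: "\<And>x y. \<tau> x = \<tau> y \<Longrightarrow> x = y" using permutes_inj[OF t] by (simp add: inj_eq)
    show "j = j'"
    proof (cases "s j = s j'")
      case True
      then have "\<tau> j = \<tau> j'" using t1[OF jj(1)] t1[OF jj(2)] e by simp
      then show ?thesis by (rule inj)
    next
      case False
      then have "\<tau> (n+1+j) = \<tau> j'" using t2[OF jj(1)] t1[OF jj(2)] e by auto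
      then have "n+1+j = j'" by (rule inj)
      then show ?thesis using jj by simp
    qed
  qed
  then have "p permutes {..<n}"
    by (rule inj_imp_permutes) (auto simp: pl, simp add: p_def)
  moreover have "\<forall>j. s j \<longrightarrow> j < n" by (simp add: s_def)
  ultimately show ?thesis using t1 t2 by blast
qed

lemma build_tau:
  fixes n :: nat and p :: "nat \<Rightarrow> nat"
  assumes p: "p permutes {..<n}"
  shows "\<exists>\<tau>. \<tau> permutes {..<2*n+1} \<and> \<tau> n = n \<and>
     (\<forall>j<n. \<tau> j = (if s j then n+1+p j else p j)) \<and>
     (\<forall>j<n. \<tau> (n+1+j) = (if s j then p j else n+1+p j))"
proof -
  define \<tau> where "\<tau> = (\<lambda>i. if i < n then (if s i then n+1+p i else p i)
      else if i = n then n else if i \<le> 2*n then (if s (i-n-1) then p (i-n-1) else n+1+p (i-n-1)) else i)"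
  have pl: "\<And>j. j < n \<Longrightarrow> p j < n" using permutes_in_image[OF p] by simp
  have pinj: "\<And>x y. (p x = p y) = (x = y)" using permutes_inj[OF p] by (simp add: inj_eq)
  have t1: "\<tau> j = (if s j then n+1+p j else p j)" if "j<n" for j using that by (simp add: \<tau>_def)
  have t2: "\<tau> (n+1+j) = (if s j then p j else n+1+p j)" if "j<n" for j using that by (simp add: \<tau>_def)
  have tn: "\<tau> n = n" by (simp add: \<tau>_def)
  have cover: "i < n \<or> i = n \<or> (\<exists>m<n. i = n+1+m)" if iN: "i<2*n+1" for i
  proof (cases "i < n \<or> i = n")
    case True thus ?thesis by blast
  next
    case False then have "i - n - 1 < n" "i = n+1+(i-n-1)" using iN by auto
    then show ?thesis by blast
  qed
  have inN: "\<tau> i < 2*n+1" if iN: "i < 2*n+1" for i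
  proof -
    from cover[OF iN] show ?thesis
    proof (elim disjE exE conjE)
      assume a: "i < n" then show ?thesis using t1[OF a] pl[OF a] by simp
    next
      assume "i = n" then show ?thesis using tn by simp
    next
      fix m assume a: "m < n" "i = n+1+m" then show ?thesis using t2[OF a(1)] pl[OF a(1)] by simp
    qed
  qed
  have "inj_on \<tau> {..<2*n+1}"
  proof (rule inj_onI)
    fix i i' assume i: "i \<in> {..<2*n+1}" "i' \<in> {..<2*n+1}" and e: "\<tau> i = \<tau> i'"
    have i2: "i < 2*n+1" "i' < 2*n+1" using i by auto
    have key: "\<tau> i = (if s (idx n i) then (if i < n then n+1+p (idx n i) else p (idx n i))
                     else (if i < n then p (idx n i) else n+1+p (idx n i)))" if "i < 2*n+1" "i \<noteq> n" for i
    proof -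
      from cover[OF that(1)] show ?thesis
      proof (elim disjE exE conjE)
        assume "i < n" then show ?thesis using t1 by (simp add: idx_def)
      next
        assume "i = n" then show ?thesis using that by simp
      next
        fix m assume "m < n" "i = n+1+m" then show ?thesis using t2 by (simp add: idx_def)
      qed
    qed
    have idxl: "idx n i < n" if "i < 2*n+1" "i \<noteq> n" for i using that by (auto simp: idx_def)
    have bk: "i = (if i < n then idx n i else n+1+idx n i)" if "i \<noteq> n" for i
      using that by (auto simp: idx_def)
    have nn: "\<tau> j \<noteq> n" if "j < 2*n+1" "j \<noteq> n" for j
    proof -
      have "p (idx n j) < n" using pl idxl[OF that] by blast
      then show ?thesis unfolding key[OF that] by simp
    qed
    show "i = i'"
    proof (cases "i = n \<or> i' = n")
      case True
      then show ?thesis using e tn nn[OF i2(1)] nn[OF i2(2)] by metis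
    next
      case False
      then have ni: "i \<noteq> n" "i' \<noteq> n" by auto
      have pa: "p (idx n i) < n" "p (idx n i') < n" using pl idxl i2 ni by auto
      have e2: "(if s (idx n i) then (if i < n then n+1+p (idx n i) else p (idx n i))
                     else (if i < n then p (idx n i) else n+1+p (idx n i))) =
            (if s (idx n i') then (if i' < n then n+1+p (idx n i') else p (idx n i'))
                     else (if i' < n then p (idx n i') else n+1+p (idx n i')))"
        using e key[OF i2(1) ni(1)] key[OF i2(2) ni(2)] by simp
      have "idx n i = idx n i' \<and> (i < n \<longleftrightarrow> i' < n)"
        using e2 pa
        by (cases "i<n"; cases "i'<n"; cases "s (idx n i)"; cases "s (idx n i')"; simp add: pinj)
      then show ?thesis using bk[OF ni(1)] bk[OF ni(2)] by metis
    qed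
  qed
  then have "\<tau> permutes {..<2*n+1}"
  proof (rule inj_imp_permutes)
    fix x assume "x \<in> {..<2*n+1}" then show "\<tau> x \<in> {..<2*n+1}" using inN by blast
  next
    fix x assume "x \<notin> {..<2*n+1}" then show "\<tau> x = x" by (simp add: \<tau>_def)
  qed simp
  then show ?thesis using t1 t2 tn by blast
qed




lemma vadd_cancel[simp]: "vadd a (vadd a b) = b"
  by (auto simp: fun_eq_iff)

lemma catidx: "a < 2*n+1 \<Longrightarrow> a \<noteq> n \<Longrightarrow> cat3 n A b A a = A (idx n a)"
  by (auto simp: cat3_def idx_def)

lemma pc_vadd: "pc N (\<lambda>i. S i \<and> vadd z w i) = (pc N (\<lambda>i. S i \<and> z i) \<noteq> pc N (\<lambda>i. S i \<and> w i))"
  by (subst pc_xor[symmetric], rule pc_cong) auto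

theorem corollary1:
  fixes k n :: nat and H :: "bvec set" and lam :: "bvec \<Rightarrow> bool" and y' :: bvec
  assumes "n = 2^k - 1"
    and "hamming_code k H"
    and "lam zerov = False"
    and "\<not> linear_on H lam"
    and "y' \<in> H"
  shows "cat3 n y' (lam y') zerov \<in> Tr (2*n+1) (VHl n H lam) \<longleftrightarrow>
         (\<exists>\<pi>\<in>Sym n H. \<exists>u\<in>Fn n. \<forall>y\<in>H.
            bxor (bxor (lam y') (lam y)) (lam (vadd y' (pact \<pi> y))) = sprod n u y)"
proof -
  note h = assms(2,1)
  have nl: "\<not> linear_on H lam" and l0: "lam zerov = False" and y'H: "y' \<in> H" using assms by auto
  have HF: "H \<subseteq> Fn n" using ham_Fn[OF h] by blast
  have finH: "finite H" using finite_subset[OF HF finite_Fn] .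
  define V where "V = VHl n H lam"
  define z where "z = cat3 n y' (lam y') zerov"
  have finV: "finite V" unfolding V_def using finite_subset[OF VHl_Fn[OF HF] finite_Fn] .
  have zF: "zerov \<in> Fn n" by (simp add: Fn_def zerov_def)
  have y'F: "y' \<in> Fn n" using y'H HF by blast
  have wz: "wpar n zerov = False" by (simp add: wpar_pc zerov_def)
  have vz: "vadd y zerov = y" for y by (simp add: fun_eq_iff zerov_def)
  have zV: "z \<in> V" unfolding z_def V_def using V_mem[OF HF y'F zF] y'H wz vz by (simp add: bxor_def)
  show ?thesis
  proof
    assume "cat3 n y' (lam y') zerov \<in> Tr (2*n+1) (VHl n H lam)"
    then obtain \<sigma> where \<sigma>: "\<sigma> permutes {..<2*n+1}" and img: "vadd z ` (pact \<sigma> ` V) = V"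
      unfolding Tr_def z_def V_def by blast
    define \<tau> where "\<tau> = inv \<sigma>"
    have \<tau>p: "\<tau> permutes {..<2*n+1}" unfolding \<tau>_def using permutes_inv[OF \<sigma>] .
    have pact\<sigma>: "pact \<sigma> v = (\<lambda>i. v (\<tau> i))" for v by (simp add: pact_def \<tau>_def)
    have clos: "vadd z (\<lambda>i. v (\<tau> i)) \<in> V" if "v \<in> V" for v
    proof -
      have "vadd z (pact \<sigma> v) \<in> vadd z ` (pact \<sigma> ` V)" using that by (intro imageI)
      then show ?thesis unfolding img pact\<sigma> .
    qed
    have \<sigma>\<tau>: "\<sigma> (\<tau> i) = i" for i unfolding \<tau>_def using permutes_inverses(1)[OF \<sigma>] .
    have step: "\<exists>A'. orthH n H A' \<and> (\<forall>i<2*n+1. cat3 n A False A (\<sigma> i) = cat3 n A' False A' i)"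
      if A: "orthH n H A" for A
    proof -
      have "\<forall>v\<in>VHl n H lam. \<not> pc (2*n+1) (\<lambda>i. cat3 n A False A (\<sigma> i) \<and> v i)"
      proof
        fix v assume v: "v \<in> VHl n H lam"
        have vv: "v \<in> V" using v V_def by simp
        have 1: "\<not> pc (2*n+1) (\<lambda>i. cat3 n A False A i \<and> vadd z (\<lambda>i. v (\<tau> i)) i)"
          by (rule orth_S[where lam=lam, OF HF A]) (use clos[OF vv] in \<open>unfold V_def\<close>)
        have 2: "\<not> pc (2*n+1) (\<lambda>i. cat3 n A False A i \<and> z i)"
          by (rule orth_S[where lam=lam, OF HF A]) (use zV in \<open>unfold V_def\<close>)
        have 3: "\<not> pc (2*n+1) (\<lambda>i. cat3 n A False A i \<and> v (\<tau> i))"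
          using 1 2 unfolding pc_vadd by simp
        have "pc (2*n+1) (\<lambda>i. cat3 n A False A (\<sigma> (\<tau> i)) \<and> v (\<tau> i)) =
              pc (2*n+1) (\<lambda>i. cat3 n A False A (\<sigma> i) \<and> v i)"
          by (rule pc_perm[OF \<tau>p, of "\<lambda>j. cat3 n A False A (\<sigma> j) \<and> v j"])
        then show "\<not> pc (2*n+1) (\<lambda>i. cat3 n A False A (\<sigma> i) \<and> v i)" using 3 \<sigma>\<tau> by simp
      qed
      then show ?thesis by (rule lemma_O[OF h nl l0, where T="\<lambda>i. cat3 n A False A (\<sigma> i)"])
    qed
    have \<sigma>l: "\<sigma> i < 2*n+1" if "i < 2*n+1" for i using permutes_in_image[OF \<sigma>, of i] that by simp
    have \<sigma>inj: "\<And>x y. (\<sigma> x = \<sigma> y) = (x = y)" using permutes_inj[OF \<sigma>] by (simp add: inj_eq)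
    have \<sigma>n: "\<sigma> n = n"
    proof (rule ccontr)
      assume ne: "\<sigma> n \<noteq> n"
      have al: "\<sigma> n < 2*n+1" using \<sigma>l by simp
      have "idx n (\<sigma> n) < n" using al ne by (auto simp: idx_def)
      then obtain A where A: "orthH n H A" "A (idx n (\<sigma> n))" using ham_sep1[OF h] by blast
      obtain A' where "\<forall>i<2*n+1. cat3 n A False A (\<sigma> i) = cat3 n A' False A' i" using step[OF A(1)] by blast
      then have "cat3 n A False A (\<sigma> n) = False" by (simp add: cat3_def)
      then show False using catidx[OF al ne] A(2) by simp
    qed
    have pairs: "\<sigma> (n+1+i) = partner n (\<sigma> i)" if i: "i < n" for i
    proof -
      define a where "a = \<sigma> i"
      define b where "b = \<sigma> (n+1+i)"
      have abl: "a < 2*n+1" "b < 2*n+1" using \<sigma>l i a_def b_def by auto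
      have "\<sigma> i \<noteq> \<sigma> n" "\<sigma> (n+1+i) \<noteq> \<sigma> n" "\<sigma> i \<noteq> \<sigma> (n+1+i)"
        unfolding \<sigma>inj using i by auto
      then have abn: "a \<noteq> n" "b \<noteq> n" "a \<noteq> b" unfolding a_def b_def \<sigma>n by auto
      have "idx n a = idx n b"
      proof (rule ccontr)
        assume ne: "idx n a \<noteq> idx n b"
        have "idx n a < n" using abl(1) abn(1) unfolding idx_def by (simp split: if_split, linarith)
        moreover have "idx n b < n" using abl(2) abn(2) unfolding idx_def by (simp split: if_split, linarith)
        ultimately obtain A where A: "orthH n H A" "A (idx n a) \<noteq> A (idx n b)" using ham_sep2[OF h _ _ ne] by blast
        obtain A' where A': "\<forall>i<2*n+1. cat3 n A False A (\<sigma> i) = cat3 n A' False A' i" using step[OF A(1)] by blast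
        have "cat3 n A False A a = A' i" using A'[rule_format, of i] i by (simp add: cat3_def a_def)
        moreover have "cat3 n A False A b = A' i" using A'[rule_format, of "n+1+i"] i by (simp add: cat3_def b_def)
        ultimately show False using catidx[OF abl(1) abn(1)] catidx[OF abl(2) abn(2)] A(2) by simp
      qed
      then have "b = partner n a" using abl abn by (auto simp: idx_def partner_def split: if_splits)
      then show ?thesis by (simp add: a_def b_def)
    qed
    have "goodp n \<sigma>" using \<sigma> \<sigma>n pairs by (simp add: goodp_def)
    then have "goodp n \<tau>" unfolding \<tau>_def by (rule goodp_inv)
    then have \<tau>n: "\<tau> n = n" by (simp add: goodp_def)
    obtain p s where p: "p permutes {..<n}" and sl: "\<forall>j. s j \<longrightarrow> j < n"
      and t1: "\<forall>j<n. \<tau> j = (if s j then n+1+p j else p j)"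
      and t2: "\<forall>j<n. \<tau> (n+1+j) = (if s j then p j else n+1+p j)"
      using struct_ps[OF \<open>goodp n \<tau>\<close>] by blast
    define \<pi> where "\<pi> = inv p"
    define u where "u = (\<lambda>i. i < n \<and> s (inv p i))"
    have pl: "\<And>j. j < n \<Longrightarrow> p j < n" using permutes_in_image[OF p] by simp
    have pact\<pi>: "pact \<pi> y = (\<lambda>i. y (p i))" for y
      by (simp add: pact_def \<pi>_def permutes_inv_inv[OF p])
    have us: "u (p j) = s j" if "j < n" for j
      using that pl[OF that] permutes_inverses(2)[OF p] by (simp add: u_def)
    have main: "pact \<pi> y \<in> H \<and> bxor (bxor (lam y') (lam y)) (lam (vadd y' (pact \<pi> y))) = sprod n u y"
      if y: "y \<in> H" for y
    proof -
      have yF: "y \<in> Fn n" using y HF by blast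
      have "cat3 n y (lam y) zerov \<in> V" unfolding V_def using V_mem[OF HF yF zF] y wz vz by (simp add: bxor_def)
      define F1 where "F1 = (\<lambda>j. j<n \<and> (if s j then zerov (p j) else y (p j)))"
      define L1 where "L1 = (\<lambda>m. m<n \<and> (if s m then y (p m) else zerov (p m)))"
      have tc: "(\<lambda>i. cat3 n y (lam y) zerov (\<tau> i)) = cat3 n F1 (lam y) L1"
        unfolding F1_def L1_def using tau_cat3[OF \<tau>p p \<tau>n _ _ yF zF, of s] t1 t2 by blast
      have "vadd z (cat3 n F1 (lam y) L1) \<in> V" using clos[OF \<open>cat3 n y (lam y) zerov \<in> V\<close>] tc by simp
      then have m: "cat3 n (vadd y' F1) (bxor (lam y') (lam y)) (vadd zerov L1) \<in> VHl n H lam"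
        unfolding z_def vadd_cat3 V_def .
      have F1F: "vadd y' F1 \<in> Fn n" "vadd zerov L1 \<in> Fn n" using y'F by (auto simp: Fn_def F1_def L1_def zerov_def)
      from m[unfolded V_mem[OF HF F1F]]
      have R1: "vadd (vadd y' F1) (vadd zerov L1) \<in> H"
        and R2: "bxor (lam y') (lam y) = bxor (wpar n (vadd zerov L1)) (lam (vadd (vadd y' F1) (vadd zerov L1)))"
        by auto
      have eqY: "vadd (vadd y' F1) (vadd zerov L1) = vadd y' (pact \<pi> y)"
      proof
        fix i show "vadd (vadd y' F1) (vadd zerov L1) i = vadd y' (pact \<pi> y) i"
        proof (cases "i < n")
          case True then show ?thesis by (auto simp: F1_def L1_def zerov_def pact\<pi>)
        next
          case False
          then have "p i = i" using permutes_not_in[OF p] by simp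
          then show ?thesis using False yF by (auto simp: F1_def L1_def zerov_def pact\<pi> Fn_def)
        qed
      qed
      have wL: "wpar n (vadd zerov L1) = sprod n u y"
      proof -
        have "wpar n (vadd zerov L1) = pc n (\<lambda>j. s j \<and> y (p j))"
          unfolding wpar_pc by (rule pc_cong) (auto simp: L1_def zerov_def)
        also have "\<dots> = sprod n u y" using sprod_perm[where u=u and s=s, OF p us] by simp
        finally show ?thesis .
      qed
      have YH: "pact \<pi> y \<in> H" using ham_add[OF h y'H R1[unfolded eqY]] by simp
      show ?thesis using YH R2 unfolding eqY wL bxor_def by argo
    qed
    have \<pi>p: "\<pi> permutes {..<n}" unfolding \<pi>_def using permutes_inv[OF p] .
    have "pact \<pi> ` H = H"
    proof (rule endo_inj_surj[OF finH])
      show "pact \<pi> ` H \<subseteq> H" using main by blast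
      show "inj_on (pact \<pi>) H"
      proof (rule inj_onI)
        fix y1 y2 assume "y1 \<in> H" "y2 \<in> H" "pact \<pi> y1 = pact \<pi> y2"
        then have e: "\<And>i. y1 (p i) = y2 (p i)" unfolding pact\<pi> by (metis)
        show "y1 = y2"
        proof
          fix x show "y1 x = y2 x" using e[of "inv p x"] permutes_inverses(1)[OF p] by simp
        qed
      qed
    qed
    then have "\<pi> \<in> Sym n H" using \<pi>p by (simp add: Sym_def)
    moreover have "u \<in> Fn n" by (simp add: u_def Fn_def)
    ultimately show "\<exists>\<pi>\<in>Sym n H. \<exists>u\<in>Fn n. \<forall>y\<in>H.
            bxor (bxor (lam y') (lam y)) (lam (vadd y' (pact \<pi> y))) = sprod n u y"
      using main by blast
  next
    assume "\<exists>\<pi>\<in>Sym n H. \<exists>u\<in>Fn n. \<forall>y\<in>H.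
            bxor (bxor (lam y') (lam y)) (lam (vadd y' (pact \<pi> y))) = sprod n u y"
    then obtain \<pi> u where \<pi>: "\<pi> permutes {..<n}" "pact \<pi> ` H = H" and uF: "u \<in> Fn n"
      and eq: "\<And>y. y \<in> H \<Longrightarrow> bxor (bxor (lam y') (lam y)) (lam (vadd y' (pact \<pi> y))) = sprod n u y"
      by (auto simp: Sym_def)
    define p where "p = inv \<pi>"
    have p: "p permutes {..<n}" unfolding p_def using permutes_inv[OF \<pi>(1)] .
    have pl: "\<And>j. j < n \<Longrightarrow> p j < n" using permutes_in_image[OF p] by simp
    have pact\<pi>: "pact \<pi> y = (\<lambda>i. y (p i))" for y by (simp add: pact_def p_def)
    define s where "s = (\<lambda>j. j < n \<and> u (p j))"
    have us: "u (p j) = s j" if "j < n" for j using that by (simp add: s_def)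
    obtain \<tau> where \<tau>p: "\<tau> permutes {..<2*n+1}" and \<tau>n: "\<tau> n = n"
      and t1: "\<forall>j<n. \<tau> j = (if s j then n+1+p j else p j)"
      and t2: "\<forall>j<n. \<tau> (n+1+j) = (if s j then p j else n+1+p j)"
      using build_tau[OF p, of s] by blast
    define \<sigma> where "\<sigma> = inv \<tau>"
    have \<sigma>p: "\<sigma> permutes {..<2*n+1}" unfolding \<sigma>_def using permutes_inv[OF \<tau>p] .
    have pact\<sigma>: "pact \<sigma> v = (\<lambda>i. v (\<tau> i))" for v
      by (simp add: pact_def \<sigma>_def permutes_inv_inv[OF \<tau>p])
    define f where "f = (\<lambda>v. vadd z (pact \<sigma> v))"
    have sub: "f ` V \<subseteq> V"
    proof
      fix w assume "w \<in> f ` V"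
      then obtain v where v: "v \<in> V" and wv: "w = f v" by blast
      obtain x y where x: "x \<in> Fn n" "y \<in> H" and ve: "v = cat3 n (vadd x y) (bxor (wpar n x) (lam y)) x"
        using v by (auto simp: V_def VHl_def)
      have yF: "y \<in> Fn n" using x HF by blast
      have xyF: "vadd x y \<in> Fn n" using x(1) yF by (rule vadd_Fn)
      define F where "F = (\<lambda>j. j<n \<and> (if s j then x (p j) else vadd x y (p j)))"
      define L where "L = (\<lambda>m. m<n \<and> (if s m then vadd x y (p m) else x (p m)))"
      define b where "b = bxor (wpar n x) (lam y)"
      have tc: "(\<lambda>i. v (\<tau> i)) = cat3 n F b L"
        unfolding F_def L_def b_def ve using tau_cat3[OF \<tau>p p \<tau>n _ _ xyF x(1), of s] t1 t2 by blast
      have w: "w = cat3 n (vadd y' F) (bxor (lam y') b) (vadd zerov L)"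
        unfolding wv f_def pact\<sigma> tc z_def vadd_cat3 ..
      have FF: "vadd y' F \<in> Fn n" "vadd zerov L \<in> Fn n" using y'F by (auto simp: Fn_def F_def L_def zerov_def)
      have eqY: "vadd (vadd y' F) (vadd zerov L) = vadd y' (pact \<pi> y)"
      proof
        fix i show "vadd (vadd y' F) (vadd zerov L) i = vadd y' (pact \<pi> y) i"
        proof (cases "i < n")
          case True then show ?thesis by (auto simp: F_def L_def zerov_def pact\<pi>)
        next
          case False
          then have "p i = i" using permutes_not_in[OF p] by simp
          then show ?thesis using False yF by (auto simp: F_def L_def zerov_def pact\<pi> Fn_def)
        qed
      qed
      have YH: "pact \<pi> y \<in> H" using \<pi>(2) x(2) by blast
      have wL: "wpar n (vadd zerov L) = (wpar n x \<noteq> sprod n u y)"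
      proof -
        have "wpar n (vadd zerov L) = pc n (\<lambda>j. x (p j) \<noteq> (s j \<and> y (p j)))"
          unfolding wpar_pc by (rule pc_cong) (auto simp: L_def zerov_def)
        also have "\<dots> = (pc n (\<lambda>j. x (p j)) \<noteq> pc n (\<lambda>j. s j \<and> y (p j)))" by (rule pc_xor)
        also have "\<dots> = (wpar n x \<noteq> sprod n u y)" using wpar_perm[OF p] sprod_perm[where u=u and s=s, OF p us] by simp
        finally show ?thesis .
      qed
      have "vadd (vadd y' F) (vadd zerov L) \<in> H \<and>
            bxor (lam y') b = bxor (wpar n (vadd zerov L)) (lam (vadd (vadd y' F) (vadd zerov L)))"
        unfolding eqY wL b_def using ham_add[OF h y'H YH] eq[OF x(2)] by (auto simp: bxor_def)
      then show "w \<in> V" unfolding w V_def using V_mem[OF HF FF] by blast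
    qed
    have inj: "inj_on f V"
    proof (rule inj_onI)
      fix v1 v2 assume "v1 \<in> V" "v2 \<in> V" "f v1 = f v2"
      then have "vadd z (vadd z (pact \<sigma> v1)) = vadd z (vadd z (pact \<sigma> v2))" by (simp add: f_def)
      then have e: "\<And>i. v1 (\<tau> i) = v2 (\<tau> i)" unfolding vadd_cancel pact\<sigma> by metis
      show "v1 = v2"
      proof
        fix x show "v1 x = v2 x" using e[of "inv \<tau> x"] permutes_inverses(1)[OF \<tau>p] by simp
      qed
    qed
    have "f ` V = V" using endo_inj_surj[OF finV sub inj] .
    then have "vadd z ` (pact \<sigma> ` V) = V" by (simp add: f_def image_image)
    then show "cat3 n y' (lam y') zerov \<in> Tr (2*n+1) (VHl n H lam)"
      using zV \<sigma>p unfolding Tr_def z_def V_def by blast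
  qed
qed


end
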